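(* Let $f(X)=X-\frac{1}{X}$. There are infinitely many pairs of positive rational numbers $(x,y)$ such that $f(x)\,f(y)=f(4)^2$. *)

theory Defs
  imports Complex_Main
begin

definition fX :: "rat \<Rightarrow> rat" where
  "fX X = X - 1 / X"

end

theory Submission
  imports Defs
begin

definition oncurve :: "rat \<Rightarrow> rat \<Rightarrow> bool" where
  "oncurve x y \<longleftrightarrow> y^2 = x^3 + 54721 * x^2 + 207360000 * x"

definition dbl :: "rat \<times> rat \<Rightarrow> rat \<times> rat" where
  "dbl P = (let x = fst P; y = snd P;
      l = (3*x^2 + 2*54721*x + 207360000)/(2*y); x' = l^2 - 54721 - 2*x
    in (x', l*(x-x') - y))"

lemma dbl_x:
  assumes "oncurve x y" "y \<noteq> 0"
  shows "fst (dbl (x,y)) = ((x^2 - 207360000)/(2*y))^2"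
proof -
  have c: "y^2 = x^3 + 54721 * x^2 + 207360000 * x" using assms(1) by (simp add: oncurve_def)
  show ?thesis using assms(2) unfolding dbl_def Let_def fst_conv snd_conv
    apply (simp add: field_simps power2_eq_square)
    using c by (simp add: power2_eq_square power3_eq_cube) algebra
qed

lemma dbl_on:
  assumes "oncurve x y" "y \<noteq> 0"
  shows "oncurve (fst (dbl (x,y))) (snd (dbl (x,y)))"
proof -
  have c: "y^2 = x^3 + 54721 * x^2 + 207360000 * x" using assms(1) by (simp add: oncurve_def)
  show ?thesis using assms(2) unfolding dbl_def Let_def fst_conv snd_conv oncurve_def
    apply (simp add: field_simps power2_eq_square)
    using c by (simp add: power2_eq_square power3_eq_cube) algebra
qed


definition good :: "nat \<Rightarrow> rat \<Rightarrow> bool" where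
  "good e x \<longleftrightarrow> (\<exists>u w :: int. odd u \<and> odd w \<and> x = of_int u / (of_int w * 4^e))"

lemma good_unique:
  assumes "good e x" "good e' x" shows "e = e'"
proof (rule ccontr)
  assume ne: "e \<noteq> e'"
  have key: "False" if "odd u" "odd w" "odd u'" "odd w'" "k < k'"
     "(of_int u :: rat) / (of_int w * 4^k) = of_int u' / (of_int w' * 4^k')" for u w u' w' :: int and k k'
  proof -
    have "(of_int u :: rat) * of_int w' * 4^k' = of_int u' * of_int w * 4^k"
    proof -
      have "w \<noteq> 0" "w' \<noteq> 0" using that(2,4) by auto
      hence "(of_int w :: rat) * 4^k \<noteq> 0" "(of_int w' :: rat) * 4^k' \<noteq> 0" by auto
      thus ?thesis using that(6) by (simp add: frac_eq_eq algebra_simps)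
    qed
    hence "(of_int (u * w' * 4^k') :: rat) = of_int (u' * w * 4^k)" by simp
    hence e1: "u * w' * 4^k' = u' * w * 4^k" by (simp only: of_int_eq_iff)
    have "(4::int)^k' = 4^k * 4^(k'-k)" using that(5) by (simp flip: power_add)
    with e1 have "u * w' * 4^(k'-k) = u' * w" by (simp add: algebra_simps)
    moreover have "even (u * w' * 4^(k'-k))" using that(5) by simp
    ultimately show False using that by simp
  qed
  from assms obtain u w u' w' where h: "odd u" "odd w" "x = of_int u / (of_int w * 4^e)"
      "odd u'" "odd w'" "x = of_int u' / (of_int w' * 4^e')" unfolding good_def by blast
  show False
  proof (cases "e < e'")
    case True thus ?thesis using key[of u w u' w' e e'] h by simp
  next
    case False hence "e' < e" using ne by simp
    thus ?thesis using key[of u' w' u w e' e] h by simp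
  qed
qed


lemma good_step:
  assumes on: "oncurve x y" and g: "good e x" and e: "e \<ge> 1"
  shows "y \<noteq> 0 \<and> good (Suc e) (fst (dbl (x,y)))"
proof -
  from g obtain u w :: int where h: "odd u" "odd w" "x = of_int u / (of_int w * 4^e)"
    unfolding good_def by blast
  define P :: int where "P = 4^e"
  have Pev: "even P" using e unfolding P_def by (cases e) auto
  have P0: "P \<noteq> 0" unfolding P_def by simp
  have w0: "w \<noteq> 0" using h(2) by auto
  have u0: "u \<noteq> 0" using h(1) by auto
  have xP: "x = of_int u / (of_int w * of_int P)" using h(3) unfolding P_def by simp
  define M where "M = u^2 + 54721 * u * w * P + 207360000 * w^2 * P^2"
  define N where "N = u^2 - 207360000 * w^2 * P^2"
  have Modd: "odd M" unfolding M_def using h(1) Pev by simp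
  have Nodd: "odd N" unfolding N_def using h(1) Pev by simp
  have M0: "M \<noteq> 0" using Modd by auto
  have N0: "N \<noteq> 0" using Nodd by auto
  have y2: "y^2 = of_int (u*M) / (of_int w^3 * of_int P^3)"
    using on unfolding oncurve_def xP M_def using w0 P0
    by (simp add: field_simps power2_eq_square power3_eq_cube)
  hence "y^2 \<noteq> 0" using u0 M0 w0 P0 by simp
  hence y0: "y \<noteq> 0" by simp
  have xa: "x^2 - 207360000 = of_int N / (of_int w^2 * of_int P^2)"
    unfolding xP N_def using w0 P0 by (simp add: field_simps power2_eq_square)
  have "fst (dbl (x,y)) = (x^2 - 207360000)^2 / (4 * y^2)"
    using dbl_x[OF on y0] by (simp add: power_divide power_mult_distrib)
  also have "\<dots> = of_int (N^2) / (of_int (w*u*M) * (4 * of_int P))"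
    unfolding xa y2 using w0 P0 u0 M0 by (simp add: field_simps power2_eq_square power3_eq_cube)
  finally have "fst (dbl (x,y)) = of_int (N^2) / (of_int (w*u*M) * 4^(Suc e))"
    unfolding P_def by simp
  moreover have "odd (N^2)" "odd (w*u*M)" using Nodd h Modd by auto
  ultimately show ?thesis using y0 unfolding good_def by blast
qed


primrec pt :: "nat \<Rightarrow> rat \<times> rat" where
  "pt 0 = (-12558375/256, 7619227875/4096)"
| "pt (Suc n) = dbl (pt n)"

lemma pt_inv: "oncurve (fst (pt n)) (snd (pt n)) \<and> good (n+4) (fst (pt n))"
proof (induction n)
  case 0
  have "good 4 (-12558375/256)" unfolding good_def
    by (rule exI[of _ "-12558375"], rule exI[of _ 1]) simp
  moreover have "oncurve (-12558375/256) (7619227875/4096)"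
    unfolding oncurve_def by (simp add: power2_eq_square power3_eq_cube)
  ultimately show ?case by simp
next
  case (Suc n)
  obtain x y where p: "pt n = (x,y)" by fastforce
  from Suc p have on: "oncurve x y" and g: "good (n+4) x" by auto
  from good_step[OF on g] have "y \<noteq> 0" "good (Suc (n+4)) (fst (dbl (x,y)))" by auto
  thus ?case using dbl_on[OF on] p by simp
qed

lemma pt_y: "snd (pt n) \<noteq> 0"
proof -
  obtain x y where p: "pt n = (x,y)" by fastforce
  thus ?thesis using good_step[of x y "n+4"] pt_inv[of n] by auto
qed

definition tt :: "nat \<Rightarrow> rat" where
  "tt n = (fst (pt n)^2 - 207360000) / (128 * snd (pt n))"
definition rr :: "nat \<Rightarrow> rat" where
  "rr n = (fst (pt n)^2 + 8192 * fst (pt n) + 207360000) / (128 * snd (pt n))"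
definition ss :: "nat \<Rightarrow> rat" where
  "ss n = (fst (pt n)^2 + 101250 * fst (pt n) + 207360000) / (128 * snd (pt n))"

lemma tt_sq: "(tt n)^2 = fst (pt (Suc n)) / 4096"
proof -
  obtain x y where p: "pt n = (x,y)" by fastforce
  have on: "oncurve x y" using pt_inv[of n] p by simp
  have y0: "y \<noteq> 0" using pt_y[of n] p by simp
  show ?thesis using dbl_x[OF on y0] p unfolding tt_def
    by (simp add: power_divide power_mult_distrib)
qed

lemma rr_sq: "(rr n)^2 = (tt n)^2 + 1"
proof -
  obtain x y where p: "pt n = (x,y)" by fastforce
  have on: "y^2 = x^3 + 54721 * x^2 + 207360000 * x" using pt_inv[of n] p by (simp add: oncurve_def)
  have y0: "y \<noteq> 0" using pt_y[of n] p by simp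
  show ?thesis using y0 p unfolding tt_def rr_def
    apply (simp add: field_simps power2_eq_square)
    using on by (simp add: power2_eq_square power3_eq_cube algebra_simps)
qed

lemma ss_sq: "(ss n)^2 = (tt n)^2 + (225/64)^2"
proof -
  obtain x y where p: "pt n = (x,y)" by fastforce
  have on: "y^2 = x^3 + 54721 * x^2 + 207360000 * x" using pt_inv[of n] p by (simp add: oncurve_def)
  have y0: "y \<noteq> 0" using pt_y[of n] p by simp
  show ?thesis using y0 p unfolding tt_def ss_def
    apply (simp add: field_simps power2_eq_square)
    using on by (simp add: power2_eq_square power3_eq_cube algebra_simps)
qed

lemma tt0: "tt n \<noteq> 0"
proof
  assume "tt n = 0"
  hence "fst (pt (Suc n)) = 0" using tt_sq[of n] by simp
  moreover have "good (Suc n + 4) (fst (pt (Suc n)))" using pt_inv[of "Suc n"] by simp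
  ultimately show False unfolding good_def by auto
qed

lemma fX_x:
  fixes t r :: rat assumes "r^2 = t^2 + 1"
  shows "t + \<bar>r\<bar> > 0 \<and> fX (t + \<bar>r\<bar>) = 2*t"
proof -
  have R: "\<bar>r\<bar>^2 = t^2 + 1" using assms by simp
  have "\<bar>t\<bar>^2 < \<bar>r\<bar>^2" using R by simp
  hence "\<bar>t\<bar> < \<bar>r\<bar>" by (rule power2_less_imp_less) simp
  hence pos: "t + \<bar>r\<bar> > 0" by linarith
  have "(\<bar>r\<bar> + t) * (\<bar>r\<bar> - t) = 1" using R by (simp add: algebra_simps power2_eq_square)
  hence "1 / (t + \<bar>r\<bar>) = \<bar>r\<bar> - t" using pos by (simp add: field_simps)
  thus ?thesis using pos unfolding fX_def by simp
qed

lemma fX_y: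
  fixes t s c :: rat assumes "s^2 = t^2 + c^2" "c > 0" "t \<noteq> 0"
  shows "c/t + \<bar>s\<bar>/\<bar>t\<bar> > 0 \<and> fX (c/t + \<bar>s\<bar>/\<bar>t\<bar>) = 2*c/t"
proof -
  have S: "\<bar>s\<bar>^2 = t^2 + c^2" using assms by simp
  have "c^2 < \<bar>s\<bar>^2" using S assms by simp
  hence "c < \<bar>s\<bar>" by (rule power2_less_imp_less) simp
  have SS: "(\<bar>s\<bar> + c) * (\<bar>s\<bar> - c) = t^2" using S by (simp add: algebra_simps power2_eq_square)
  show ?thesis
  proof (cases "t > 0")
    case True
    hence y: "c/t + \<bar>s\<bar>/\<bar>t\<bar> = (c + \<bar>s\<bar>)/t" by (simp add: add_divide_distrib)
    have pos: "(c + \<bar>s\<bar>)/t > 0" using True \<open>c < \<bar>s\<bar>\<close> assms by simp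
    have "1/((c + \<bar>s\<bar>)/t) = (\<bar>s\<bar> - c)/t" using SS True \<open>c < \<bar>s\<bar>\<close> assms
      by (simp add: field_simps power2_eq_square)
    hence "fX ((c + \<bar>s\<bar>)/t) = (c + \<bar>s\<bar>)/t - (\<bar>s\<bar> - c)/t" unfolding fX_def by simp
    also have "\<dots> = ((c + \<bar>s\<bar>) - (\<bar>s\<bar> - c))/t" by (rule diff_divide_distrib[symmetric])
    also have "\<dots> = 2*c/t" by simp
    finally show ?thesis using y pos by simp
  next
    case False hence tn: "t < 0" using assms by simp
    hence y: "c/t + \<bar>s\<bar>/\<bar>t\<bar> = (c - \<bar>s\<bar>)/t" by (simp add: diff_divide_distrib)
    have pos: "(c - \<bar>s\<bar>)/t > 0" using tn \<open>c < \<bar>s\<bar>\<close> by (simp add: divide_neg_neg)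
    have "1/((c - \<bar>s\<bar>)/t) = -(\<bar>s\<bar> + c)/t" using SS tn \<open>c < \<bar>s\<bar>\<close> assms
      by (simp add: field_simps power2_eq_square)
    thus ?thesis using y pos unfolding fX_def by (simp add: diff_divide_distrib add_divide_distrib)
  qed
qed

definition sol :: "nat \<Rightarrow> rat \<times> rat" where
  "sol n = (tt n + \<bar>rr n\<bar>, (225/64)/tt n + \<bar>ss n\<bar>/\<bar>tt n\<bar>)"

lemma sol_in: "sol n \<in> {(x :: rat, y :: rat). 0 < x \<and> 0 < y \<and> fX x * fX y = (fX 4)^2}"
proof -
  have a: "tt n + \<bar>rr n\<bar> > 0 \<and> fX (tt n + \<bar>rr n\<bar>) = 2 * tt n" using fX_x rr_sq by blast
  have b: "(225/64)/tt n + \<bar>ss n\<bar>/\<bar>tt n\<bar> > 0 \<and> fX ((225/64)/tt n + \<bar>ss n\<bar>/\<bar>tt n\<bar>) = 2*(225/64)/tt n"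
    using fX_y[OF ss_sq] tt0 by simp
  have f4: "fX 4 = 15/4" by (simp add: fX_def)
  have "2 * tt n * (2*(225/64)/tt n) = (fX 4)^2" using tt0[of n] unfolding f4 by (simp add: power2_eq_square)
  thus ?thesis using a b unfolding sol_def by simp
qed

lemma sol_inj: "inj sol"
proof (rule injI)
  fix n m assume "sol n = sol m"
  hence "fX (fst (sol n)) = fX (fst (sol m))" by simp
  hence "tt n = tt m" unfolding sol_def using fX_x[OF rr_sq[of n]] fX_x[OF rr_sq[of m]] by simp
  hence "fst (pt (Suc n)) = fst (pt (Suc m))" using tt_sq[of n] tt_sq[of m] by simp
  thus "n = m" using pt_inv[of "Suc n"] pt_inv[of "Suc m"] good_unique by fastforce
qed

theorem mainTheorem9:
  shows "infinite {(x :: rat, y :: rat). 0 < x \<and> 0 < y \<and> fX x * fX y = (fX 4)^2}"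
proof -
  have "infinite (range sol)" using finite_imageD[of sol UNIV] sol_inj by auto
  moreover have "range sol \<subseteq> {(x :: rat, y :: rat). 0 < x \<and> 0 < y \<and> fX x * fX y = (fX 4)^2}"
    using sol_in by (simp add: image_subset_iff)
  ultimately show ?thesis using infinite_super by blast
qed

end
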